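(* Let $\mathcal{Q}=\left(\frac{\lambda,\ \mu}{F}\right)$ be a generalized quaternion algebra and $\mathbf{a}=a_1i+a_2j+a_3k$, $\mathbf{b}=b_1i+b_2j+b_3k$ pure quaternions. Then $\mathbf{a},\mathbf{b},\mathbf{a}\times\mathbf{b}$ are linearly dependent over $F$ if and only if $N(\mathbf{a})N(\mathbf{b})=(\mathbf{a}\cdot\mathbf{b})^2$. This is equivalent to $N(\mathbf{a}\times\mathbf{b})=0$, i.e. to $-\mu(a_2b_3-a_3b_2)^2-\lambda(a_1b_3-a_3b_1)^2+(a_1b_2-a_2b_1)^2=0$; that is, $\mathbf{a}\times\mathbf{b}$ is isotropic or zero.
   Context: $F$ is a field of characteristic $\neq2$, $\lambda,\mu\in F$ nonzero; $\mathcal{Q}$ has $F$-basis $1,i,j,k$ with $i^2=\lambda$, $j^2=\mu$, $ij=-ji=k$. Norm: $N(x_0+x_1i+x_2j+x_3k)=x_0^2-\lambda x_1^2-\mu x_2^2+\lambda\mu x_3^2$. For pure $\mathbf{a},\mathbf{b}$: $\mathbf{a}\cdot\mathbf{b}=-\lambda a_1b_1-\mu a_2b_2+\lambda\mu a_3b_3$ and $\mathbf{a}\times\mathbf{b}=-\mu(a_2b_3-a_3b_2)\,i+\lambda(a_1b_3-a_3b_1)\,j+(a_1b_2-a_2b_1)\,k$. A nonzero element $X$ is isotropic if $N(X)=0$. *)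

theory Defs
  imports Main
begin

text \<open>Elements of the generalized quaternion algebra (lambda, mu / F), written in the
  F-basis 1, i, j, k: Quat x0 x1 x2 x3 = x0 + x1 i + x2 j + x3 k.\<close>
datatype 'a quat = Quat 'a 'a 'a 'a

fun q0 :: "'a quat \<Rightarrow> 'a" where "q0 (Quat x0 x1 x2 x3) = x0"
fun q1 :: "'a quat \<Rightarrow> 'a" where "q1 (Quat x0 x1 x2 x3) = x1"
fun q2 :: "'a quat \<Rightarrow> 'a" where "q2 (Quat x0 x1 x2 x3) = x2"
fun q3 :: "'a quat \<Rightarrow> 'a" where "q3 (Quat x0 x1 x2 x3) = x3"

definition qzero :: "'a::field quat" where "qzero = Quat 0 0 0 0"

definition qadd :: "'a::field quat \<Rightarrow> 'a quat \<Rightarrow> 'a quat" where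
  "qadd x y = Quat (q0 x + q0 y) (q1 x + q1 y) (q2 x + q2 y) (q3 x + q3 y)"

definition qscale :: "'a::field \<Rightarrow> 'a quat \<Rightarrow> 'a quat" where
  "qscale c x = Quat (c * q0 x) (c * q1 x) (c * q2 x) (c * q3 x)"

definition pure :: "'a::field quat \<Rightarrow> bool" where "pure x \<longleftrightarrow> q0 x = 0"

definition qnorm :: "'a::field \<Rightarrow> 'a \<Rightarrow> 'a quat \<Rightarrow> 'a" where
  "qnorm lam mu x = (q0 x)^2 - lam * (q1 x)^2 - mu * (q2 x)^2 + lam * mu * (q3 x)^2"

definition qdot :: "'a::field \<Rightarrow> 'a \<Rightarrow> 'a quat \<Rightarrow> 'a quat \<Rightarrow> 'a" where
  "qdot lam mu a b = - lam * q1 a * q1 b - mu * q2 a * q2 b + lam * mu * q3 a * q3 b"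

definition qcross :: "'a::field \<Rightarrow> 'a \<Rightarrow> 'a quat \<Rightarrow> 'a quat \<Rightarrow> 'a quat" where
  "qcross lam mu a b = Quat 0
     (- mu * (q2 a * q3 b - q3 a * q2 b))
     (lam * (q1 a * q3 b - q3 a * q1 b))
     (q1 a * q2 b - q2 a * q1 b)"

definition lin_dep3 :: "'a::field quat \<Rightarrow> 'a quat \<Rightarrow> 'a quat \<Rightarrow> bool" where
  "lin_dep3 x y z \<longleftrightarrow> (\<exists>c1 c2 c3. (c1 \<noteq> 0 \<or> c2 \<noteq> 0 \<or> c3 \<noteq> 0) \<and>
      qadd (qadd (qscale c1 x) (qscale c2 y)) (qscale c3 z) = qzero)"

end

theory Submission
  imports Defs
begin

lemma det_dep:
  fixes a1 a2 a3 b1 b2 b3 c1 c2 c3 x y z :: "'a::field"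
  assumes "x*a1 + y*b1 + z*c1 = 0" "x*a2 + y*b2 + z*c2 = 0" "x*a3 + y*b3 + z*c3 = 0"
    and "x \<noteq> 0 \<or> y \<noteq> 0 \<or> z \<noteq> 0"
  shows "a1*(b2*c3-b3*c2) - a2*(b1*c3-b3*c1) + a3*(b1*c2-b2*c1) = 0"
proof -
  let ?d = "a1*(b2*c3-b3*c2) - a2*(b1*c3-b3*c1) + a3*(b1*c2-b2*c1)"
  have "x * ?d = 0" using assms(1-3) by algebra
  moreover have "y * ?d = 0" using assms(1-3) by algebra
  moreover have "z * ?d = 0" using assms(1-3) by algebra
  ultimately show ?thesis using assms(4) by auto
qed

theorem lemma3p5:
  fixes lam mu :: "'a::field" and a b :: "'a quat"
  assumes "(2::'a) \<noteq> 0" and "lam \<noteq> 0" and "mu \<noteq> 0"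
    and "pure a" and "pure b"
  shows "(lin_dep3 a b (qcross lam mu a b) \<longleftrightarrow>
            qnorm lam mu a * qnorm lam mu b = (qdot lam mu a b)^2)
       \<and> (qnorm lam mu a * qnorm lam mu b = (qdot lam mu a b)^2 \<longleftrightarrow>
            qnorm lam mu (qcross lam mu a b) = 0)
       \<and> (qnorm lam mu (qcross lam mu a b) = 0 \<longleftrightarrow>
            - mu * (q2 a * q3 b - q3 a * q2 b)^2 - lam * (q1 a * q3 b - q3 a * q1 b)^2
              + (q1 a * q2 b - q2 a * q1 b)^2 = 0)"
proof -
  obtain a0 a1 a2 a3 where a: "a = Quat a0 a1 a2 a3" by (cases a)
  obtain b0 b1 b2 b3 where b: "b = Quat b0 b1 b2 b3" by (cases b)
  have a0: "a0 = 0" using assms(4) a by (simp add: pure_def)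
  have b0: "b0 = 0" using assms(5) b by (simp add: pure_def)
  define u where "u = a2*b3 - a3*b2"
  define v where "v = a1*b3 - a3*b1"
  define w where "w = a1*b2 - a2*b1"
  define E where "E = - mu * u^2 - lam * v^2 + w^2"
  define c1 where "c1 = - mu * u"
  define c2 where "c2 = lam * v"
  define c3 where "c3 = w"
  have cr: "qcross lam mu a b = Quat 0 c1 c2 c3"
    by (simp add: a b qcross_def c1_def c2_def c3_def u_def v_def w_def)
  have det: "a1*(b2*c3-b3*c2) - a2*(b1*c3-b3*c1) + a3*(b1*c2-b2*c1) = E"
    unfolding E_def c1_def c2_def c3_def u_def v_def w_def by algebra
  have nc: "qnorm lam mu (qcross lam mu a b) = lam * mu * E"
    unfolding cr qnorm_def E_def c1_def c2_def c3_def by simp algebra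
  have lag: "qnorm lam mu a * qnorm lam mu b - (qdot lam mu a b)^2 = lam * mu * E"
    unfolding a b a0 b0 qnorm_def qdot_def E_def u_def v_def w_def by simp algebra
  have lmE: "lam * mu * E = 0 \<longleftrightarrow> E = 0" using assms(2,3) by simp
  have p3: "qnorm lam mu (qcross lam mu a b) = 0 \<longleftrightarrow>
            - mu * (q2 a * q3 b - q3 a * q2 b)^2 - lam * (q1 a * q3 b - q3 a * q1 b)^2
              + (q1 a * q2 b - q2 a * q1 b)^2 = 0"
    using nc lmE by (simp add: a b E_def u_def v_def w_def)
  have p2: "qnorm lam mu a * qnorm lam mu b = (qdot lam mu a b)^2 \<longleftrightarrow>
            qnorm lam mu (qcross lam mu a b) = 0"
    using lag nc by (metis eq_iff_diff_eq_0)
  have ld: "lin_dep3 a b (qcross lam mu a b) \<longleftrightarrow>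
     (\<exists>x y z. (x \<noteq> 0 \<or> y \<noteq> 0 \<or> z \<noteq> 0) \<and> x*a1 + y*b1 + z*c1 = 0 \<and>
        x*a2 + y*b2 + z*c2 = 0 \<and> x*a3 + y*b3 + z*c3 = 0)"
    unfolding lin_dep3_def cr by (simp add: a b a0 b0 qadd_def qscale_def qzero_def)
  have p1: "lin_dep3 a b (qcross lam mu a b) \<longleftrightarrow> E = 0"
  proof
    assume "lin_dep3 a b (qcross lam mu a b)"
    then obtain x y z where "(x \<noteq> 0 \<or> y \<noteq> 0 \<or> z \<noteq> 0)" "x*a1 + y*b1 + z*c1 = 0"
        "x*a2 + y*b2 + z*c2 = 0" "x*a3 + y*b3 + z*c3 = 0" using ld by blast
    then show "E = 0" using det_dep det by metis
  next
    assume E0: "E = 0"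
    hence D0: "a1*(b2*c3-b3*c2) - a2*(b1*c3-b3*c1) + a3*(b1*c2-b2*c1) = 0" using det by simp
    show "lin_dep3 a b (qcross lam mu a b)"
    proof (cases "u = 0 \<and> v = 0 \<and> w = 0")
      case True
      hence "c1 = 0" "c2 = 0" "c3 = 0" by (auto simp: c1_def c2_def c3_def)
      then show ?thesis using ld by (intro iffD2[OF ld] exI[of _ 0] exI[of _ 1]) simp
    next
      case False
      then consider "u \<noteq> 0" | "v \<noteq> 0" | "w \<noteq> 0" by blast
      then show ?thesis
      proof cases
        case 1
        show ?thesis
          apply (rule iffD2[OF ld])
          apply (rule exI[of _ "b2*c3 - b3*c2"], rule exI[of _ "-(a2*c3 - a3*c2)"], rule exI[of _ u])
          using 1 D0 unfolding u_def by (intro conjI) (simp add: algebra_simps | algebra)+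
      next
        case 2
        show ?thesis
          apply (rule iffD2[OF ld])
          apply (rule exI[of _ "-(b1*c3 - b3*c1)"], rule exI[of _ "a1*c3 - a3*c1"], rule exI[of _ "-v"])
          using 2 D0 unfolding v_def by (intro conjI) (simp add: algebra_simps | algebra)+
      next
        case 3
        show ?thesis
          apply (rule iffD2[OF ld])
          apply (rule exI[of _ "b1*c2 - b2*c1"], rule exI[of _ "-(a1*c2 - a2*c1)"], rule exI[of _ w])
          using 3 D0 unfolding w_def by (intro conjI) (simp add: algebra_simps | algebra)+
      qed
    qed
  qed
  show ?thesis using p1 p2 p3 lag lmE nc by auto
qed

end
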